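(* Let $\lambda_{\max}=1$ and let $F:[0,1]\to\mathbb{R}_+$ be continuously differentiable with $F(0)=0$, such that $F(x)<F^\star$ for all $x\in[0,1)$ and $F'(1)>0$. Then there exists $k\in(0,F'(1)]$ such that $F(x)\le k(x-1)+F(1)$ for all $x\in[0,1]$.
   Context: $F^\star=\sup\{\mathbb{E}_\alpha[F(X)]:\alpha$ a probability measure on $[0,\lambda_{\max}]$, $X\sim\alpha$, $\mathbb{E}_\alpha[X]\le1\}$. *)

theory Defs
  imports "HOL-Probability.Probability"
begin

definition Fstar :: "real \<Rightarrow> (real \<Rightarrow> real) \<Rightarrow> real" where
  "Fstar lmax F = Sup {(\<integral>x. F x \<partial>M) | M.
      prob_space M \<and> sets M = sets (restrict_space borel {0..lmax}) \<and>
      (\<integral>x. x \<partial>M) \<le> 1}"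

end

theory Submission
  imports Defs
begin

theorem lemmaA1:
  fixes F F' :: "real \<Rightarrow> real"
  assumes deriv: "\<forall>x\<in>{0..1}. (F has_real_derivative F' x) (at x within {0..1})"
    and cont_deriv: "continuous_on {0..1} F'"
    and nonneg: "\<forall>x\<in>{0..1}. F x \<ge> 0"
    and F0: "F 0 = 0"
    and below: "\<forall>x\<in>{0..<1}. F x < Fstar 1 F"
    and pos: "F' 1 > 0"
  shows "\<exists>k. 0 < k \<and> k \<le> F' 1 \<and> (\<forall>x\<in>{0..1}. F x \<le> k * (x - 1) + F 1)"
proof -
  have contF: "continuous_on {0..1} F"
    using deriv by (intro DERIV_continuous_on) auto
  obtain x0 where x0: "x0 \<in> {0..1}" and x0max: "\<forall>y\<in>{0..1}. F y \<le> F x0"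
    using continuous_attains_sup[OF compact_Icc _ contF] by force
  define S where "S = {(\<integral>x. F x \<partial>M) | M.
      prob_space M \<and> sets M = sets (restrict_space borel {0..(1::real)}) \<and>
      (\<integral>x. x \<partial>M) \<le> 1}"
  have ub: "s \<le> F x0" if sS: "s \<in> S" for s
  proof -
    obtain M where s: "s = (\<integral>x. F x \<partial>M)" and P: "prob_space M"
      and sM: "sets M = sets (restrict_space borel {0..(1::real)})"
      using sS unfolding S_def by blast
    have sp: "space M = {0..1}"
      using sets_eq_imp_space_eq[OF sM] by simp
    show ?thesis
    proof (cases "integrable M F")
      case True
      interpret prob_space M by fact
      have "(\<integral>x. F x \<partial>M) \<le> (\<integral>x. F x0 \<partial>M)"
        by (rule integral_mono[OF True]) (auto simp: sp x0max)
      also have "\<dots> = F x0" by (simp add: prob_space)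
      finally show ?thesis using s by simp
    next
      case False
      then have "s = 0" using s not_integrable_integral_eq by blast
      then show ?thesis using nonneg x0 by auto
    qed
  qed
  define N where "N = return (restrict_space borel {0..(1::real)}) 1"
  have "(\<integral>x. x \<partial>N) = 1" unfolding N_def
    by (subst integral_return) (auto intro: measurable_restrict_space1)
  moreover have "prob_space N" unfolding N_def
    by (rule prob_space_return) auto
  ultimately have "(\<integral>x. F x \<partial>N) \<in> S" unfolding S_def N_def by auto
  then have ne: "S \<noteq> {}" by auto
  have FsS: "Fstar 1 F = Sup S" unfolding Fstar_def S_def by simp
  have Fs: "Fstar 1 F \<le> F x0" unfolding FsS by (rule cSup_least[OF ne]) (use ub in auto)
  have "x0 = 1"
  proof (rule ccontr)
    assume "x0 \<noteq> 1"
    then have "x0 \<in> {0..<1}" using x0 by auto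
    then show False using below Fs by fastforce
  qed
  then have lt: "\<forall>x\<in>{0..<1}. F x < F 1" using below Fs by fastforce
  have "((\<lambda>y. (F y - F 1) / (y - 1)) \<longlongrightarrow> F' 1) (at 1 within {0..1})"
    using deriv by (simp add: has_field_derivative_iff[symmetric])
  then have "\<forall>\<^sub>F y in at 1 within {0..1}. (F y - F 1) / (y - 1) > F' 1 / 2"
    using pos by (intro order_tendstoD) auto
  then obtain d where d: "d > 0"
    and dP: "\<forall>y\<in>{0..1}. y \<noteq> 1 \<and> dist y 1 < d \<longrightarrow> (F y - F 1) / (y - 1) > F' 1 / 2"
    unfolding eventually_at by auto
  define a where "a = max 0 (1 - d/2)"
  have a: "0 \<le> a" "a < 1" using d unfolding a_def by auto
  have contG: "continuous_on {0..a} (\<lambda>x. F 1 - F x)"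
    using contF a by (intro continuous_intros) (auto elim: continuous_on_subset)
  obtain x1 where x1: "x1 \<in> {0..a}" and x1min: "\<forall>y\<in>{0..a}. F 1 - F x1 \<le> F 1 - F y"
    using continuous_attains_inf[OF compact_Icc _ contG] a by force
  define c where "c = F 1 - F x1"
  have c: "c > 0" using lt x1 a unfolding c_def by auto
  define k where "k = min c (F' 1 / 2)"
  show ?thesis
  proof (intro exI[of _ k] conjI ballI)
    show "0 < k" using c pos unfolding k_def by auto
    show "k \<le> F' 1" using pos unfolding k_def by auto
  next
    fix x :: real assume x: "x \<in> {0..1}"
    show "F x \<le> k * (x - 1) + F 1"
    proof (cases "x \<le> a")
      case True
      then have "c \<le> F 1 - F x" using x1min x unfolding c_def by auto
      moreover have "k * (1 - x) \<le> c * 1"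
        using x c unfolding k_def by (intro mult_mono) auto
      ultimately show ?thesis by (simp add: algebra_simps)
    next
      case False
      show ?thesis
      proof (cases "x = 1")
        case True then show ?thesis by simp
      next
        case ne1: False
        have "dist x 1 < d" using False x d unfolding a_def dist_real_def by auto
        then have q: "(F x - F 1) / (x - 1) > F' 1 / 2" using dP x ne1 by auto
        have xl: "x - 1 < 0" using x ne1 by auto
        have "F' 1 / 2 * (x - 1) \<ge> F x - F 1"
          using q xl by (simp add: pos_divide_less_eq neg_less_divide_eq neg_divide_less_eq)
        moreover have "k * (x - 1) \<ge> F' 1 / 2 * (x - 1)"
          using xl unfolding k_def by (intro mult_right_mono_neg) auto
        ultimately show ?thesis by linarith
      qed
    qed
  qed
qed

end
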